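(* Fix $\epsilon=\phi\in\mathbb R$ with $|\epsilon|>1$. Then: 1. For each $n$ there exist two distinct eigenvalues $\mu_n,\nu_n$ of $T_{n,\epsilon,\phi}$ with $\mu_n,\nu_n\to\epsilon+\epsilon^{-1}$ as $n\to\infty$, and eventually $\mu_n,\nu_n$ are the only two outliers of $T_{n,\epsilon,\phi}$ (in particular there are exactly two eigenvalues converging to $\epsilon+\epsilon^{-1}$). 2. Let $\mathbf x_n,\mathbf y_n$ be eigenvectors of $T_{n,\epsilon,\phi}$ associated with $\mu_n,\nu_n$ respectively, with $\|\mathbf x_n\|_2=\|\mathbf y_n\|_2=1$. Then, up to renaming $\mu_n$ and $\nu_n$, eventually $E_n\mathbf x_n=\mathbf x_n$ and $E_n\mathbf y_n=-\mathbf y_n$. Moreover $\|\mathbf x_n-P_{\mathbf v_n+\mathbf w_n}\mathbf x_n\|_2\to0$ and $\|\mathbf y_n-P_{\mathbf v_n-\mathbf w_n}\mathbf y_n\|_2\to0$ as $n\to\infty$, where $\mathbf v_n=[1,\epsilon^{-1},\ldots,\epsilon^{-n+1}]^\top$ and $\mathbf w_n=E_n\mathbf v_n=[\epsilon^{-n+1},\ldots,\epsilon^{-1},1]^\top$.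
   Context: For $n\ge2$ and real parameters $\epsilon,\phi$, $T_{n,\epsilon,\phi}$ is the real symmetric tridiagonal $n\times n$ matrix with diagonal entries $(\epsilon,0,\ldots,0,\phi)$ and all sub- and super-diagonal entries equal to $1$. An outlier is an eigenvalue not in $[-2,2]$. $E_n$ is the $n\times n$ flip matrix ($(E_n)_{ij}=1$ iff $i+j=n+1$, else $0$). For $\mathbf u\in\mathbb R^n\setminus\{0\}$, $P_{\mathbf u}\mathbf x=\frac{\mathbf x^\top\mathbf u}{\mathbf u^\top\mathbf u}\mathbf u$ is the orthogonal projector onto $\mathrm{span}\{\mathbf u\}$. *)

theory Defs
  imports Complex_Main
begin

text \<open>Vectors in R^n are represented as functions nat => real, using indices 0..n-1
  (index i here corresponds to index i+1 in the paper); n x n matrices as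
  nat => nat => real with the same index convention.\<close>

definition T :: "nat \<Rightarrow> real \<Rightarrow> real \<Rightarrow> nat \<Rightarrow> nat \<Rightarrow> real" where
  "T n \<epsilon> \<phi> i j =
     (if i = j then (if i = 0 then \<epsilon> else if i = n - 1 then \<phi> else 0)
      else if i + 1 = j \<or> j + 1 = i then 1 else 0)"

definition mat_vec :: "nat \<Rightarrow> (nat \<Rightarrow> nat \<Rightarrow> real) \<Rightarrow> (nat \<Rightarrow> real) \<Rightarrow> nat \<Rightarrow> real" where
  "mat_vec n A x i = (\<Sum>j<n. A i j * x j)"

definition is_eigvec :: "nat \<Rightarrow> (nat \<Rightarrow> nat \<Rightarrow> real) \<Rightarrow> real \<Rightarrow> (nat \<Rightarrow> real) \<Rightarrow> bool" where
  "is_eigvec n A c x \<longleftrightarrow> (\<exists>i<n. x i \<noteq> 0) \<and> (\<forall>i<n. mat_vec n A x i = c * x i)"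

definition is_eigval :: "nat \<Rightarrow> (nat \<Rightarrow> nat \<Rightarrow> real) \<Rightarrow> real \<Rightarrow> bool" where
  "is_eigval n A c \<longleftrightarrow> (\<exists>x. is_eigvec n A c x)"

definition outliers :: "nat \<Rightarrow> (nat \<Rightarrow> nat \<Rightarrow> real) \<Rightarrow> real set" where
  "outliers n A = {c. is_eigval n A c \<and> c \<notin> {-2..2}}"

definition flip :: "nat \<Rightarrow> (nat \<Rightarrow> real) \<Rightarrow> nat \<Rightarrow> real" where
  "flip n x i = x (n - 1 - i)"

definition vnorm :: "nat \<Rightarrow> (nat \<Rightarrow> real) \<Rightarrow> real" where
  "vnorm n x = sqrt (\<Sum>i<n. (x i)\<^sup>2)"

definition proj :: "nat \<Rightarrow> (nat \<Rightarrow> real) \<Rightarrow> (nat \<Rightarrow> real) \<Rightarrow> nat \<Rightarrow> real" where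
  "proj n u x i = (\<Sum>j<n. x j * u j) / (\<Sum>j<n. u j * u j) * u i"

definition vdiff :: "nat \<Rightarrow> (nat \<Rightarrow> real) \<Rightarrow> (nat \<Rightarrow> real) \<Rightarrow> nat \<Rightarrow> real" where
  "vdiff n x y i = x i - y i"

definition vv :: "real \<Rightarrow> nat \<Rightarrow> nat \<Rightarrow> real" where
  "vv \<epsilon> n i = (1 / \<epsilon>) ^ i"

definition ww :: "real \<Rightarrow> nat \<Rightarrow> nat \<Rightarrow> real" where
  "ww \<epsilon> n = flip n (vv \<epsilon> n)"

end

theory Submission
  imports Defs
begin


fun X :: "real \<Rightarrow> real \<Rightarrow> nat \<Rightarrow> real" where
  "X e l 0 = 1"
| "X e l (Suc 0) = l - e"
| "X e l (Suc (Suc i)) = l * X e l (Suc i) - X e l i"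

definition D :: "nat \<Rightarrow> real \<Rightarrow> real \<Rightarrow> real" where
  "D n e l = X e l n - e * X e l (n - 1)"

lemma row:
  assumes "n \<ge> 2" "i < n"
  shows "mat_vec n (T n e e) x i =
     (if i = 0 then e * x 0 else x (i - 1)) + (if i = n - 1 then e * x i else x (i + 1))"
proof -
  have eq: "T n e e i j * x j = (if j = i then (if i = 0 \<or> i = n - 1 then e else 0) * x i else 0)
      + (if j = Suc i then x (Suc i) else 0) + (if j = i - 1 \<and> i > 0 then x (i - 1) else 0)" for j
    unfolding T_def by auto
  have "mat_vec n (T n e e) x i = (\<Sum>j<n. (if j = i then (if i = 0 \<or> i = n - 1 then e else 0) * x i else 0))
      + (\<Sum>j<n. (if j = Suc i then x (Suc i) else 0)) + (\<Sum>j<n. (if j = i - 1 \<and> i > 0 then x (i - 1) else 0))"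
    unfolding mat_vec_def eq sum.distrib by simp
  also have "\<dots> = (if i = 0 \<or> i = n - 1 then e else 0) * x i + (if Suc i < n then x (Suc i) else 0)
      + (if i > 0 then x (i - 1) else 0)"
    using assms by (auto simp add: sum.delta' cong: if_cong) 
  moreover have "i \<noteq> n - 1 \<Longrightarrow> Suc i < n" using assms by auto
  ultimately show ?thesis using assms by (cases "i = 0"; cases "i = n - 1"; simp)
qed

lemma X_step: "Suc i < n \<Longrightarrow> X e l (i + 2) = l * X e l (i+1) - X e l i"
  by (simp add: numeral_2_eq_2)

lemma X_eig:
  assumes "n \<ge> 2" "D n e l = 0"
  shows "is_eigvec n (T n e e) l (X e l)"
  unfolding is_eigvec_def
proof (intro conjI allI impI)
  show "\<exists>i<n. X e l i \<noteq> 0" using assms by (intro exI[of _ 0]) auto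
  fix i assume i: "i < n"
  show "mat_vec n (T n e e) (X e l) i = l * X e l i"
  proof (cases "i = 0")
    case True then show ?thesis using assms i by (simp add: row)
  next
    case False
    then obtain k where k: "i = Suc k" by (cases i) auto
    show ?thesis
    proof (cases "i = n - 1")
      case True
      have "n = Suc (Suc k)" using k True assms by simp
      then show ?thesis using assms k True by (simp add: row D_def algebra_simps)
    next
      case False
      then show ?thesis using assms k i by (simp add: row algebra_simps)
    qed
  qed
qed

lemma eig_X:
  assumes n: "n \<ge> 2" and ev: "is_eigvec n (T n e e) l x"
  shows "(\<forall>i<n. x i = x 0 * X e l i) \<and> x 0 \<noteq> 0 \<and> D n e l = 0"
proof -
  have rows: "\<And>i. i < n \<Longrightarrow> (if i = 0 then e * x 0 else x (i - 1)) + (if i = n - 1 then e * x i else x (i + 1)) = l * x i"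
    using ev n by (simp add: is_eigvec_def row)
  have pair: "x i = x 0 * X e l i \<and> x (Suc i) = x 0 * X e l (Suc i)" if "Suc i < n" for i
    using that
  proof (induction i)
    case 0
    have "e * x 0 + x 1 = l * x 0" using rows[of 0] n by simp
    then show ?case by (simp add: algebra_simps)
  next
    case (Suc i)
    then have IH: "x i = x 0 * X e l i \<and> x (Suc i) = x 0 * X e l (Suc i)" by simp
    have ne: "Suc i \<noteq> n - 1" using Suc.prems by simp
    have "x i + x (Suc (Suc i)) = l * x (Suc i)" using rows[of "Suc i"] Suc.prems ne by simp
    then show ?case using IH by (simp add: algebra_simps)
  qed
  have all: "\<forall>i<n. x i = x 0 * X e l i"
  proof (intro allI impI)
    fix i assume "i < n"
    show "x i = x 0 * X e l i"
    proof (cases i)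
      case 0 then show ?thesis by simp
    next
      case (Suc j) then show ?thesis using pair[of j] \<open>i < n\<close> by simp
    qed
  qed
  have x0: "x 0 \<noteq> 0"
  proof
    assume "x 0 = 0"
    then have "\<forall>i<n. x i = 0" using all by (metis mult_zero_left)
    then show False using ev by (auto simp: is_eigvec_def)
  qed
  define m where "m = n - 2"
  have m: "n = Suc (Suc m)" using n unfolding m_def by simp
  have "x m + e * x (Suc m) = l * x (Suc m)" using rows[of "Suc m"] m by simp
  moreover have "x m = x 0 * X e l m" "x (Suc m) = x 0 * X e l (Suc m)"
    using spec[OF all, of m] spec[OF all, of "Suc m"] m by auto
  ultimately have "x 0 * (X e l m + e * X e l (Suc m) - l * X e l (Suc m)) = 0"
    by (simp add: algebra_simps)
  then have "X e l m + e * X e l (Suc m) - l * X e l (Suc m) = 0" using x0 by simp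
  then have "D n e l = 0" using m by (simp add: D_def algebra_simps)
  with all x0 show ?thesis by blast
qed

lemma eigval_iff: "n \<ge> 2 \<Longrightarrow> is_eigval n (T n e e) l \<longleftrightarrow> D n e l = 0"
  using X_eig eig_X unfolding is_eigval_def by blast



definition F :: "nat \<Rightarrow> real \<Rightarrow> real \<Rightarrow> real \<Rightarrow> real" where
  "F n e \<sigma> t = 1 - e * t - \<sigma> * (e - t) * t ^ n"

lemma Xt_pair:
  assumes t: "t \<noteq> 0"
  shows "X e (t + 1/t) i * (1 - t^2) * t^i = (1 - e*t) + t*(e-t)*(t^i*t^i)
       \<and> X e (t + 1/t) (Suc i) * (1 - t^2) * t^(Suc i) = (1 - e*t) + t*(e-t)*(t^Suc i*t^Suc i)"
proof (induction i)
  case 0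
  have "(t + 1 / t - e) * (1 - t\<^sup>2) * t = (t^2 + 1 - e*t) * (1 - t^2)"
    using t by (simp add: field_simps power2_eq_square)
  then show ?case by (simp add: algebra_simps power2_eq_square)
next
  case (Suc i)
  define l where "l = t + 1/t"
  have lt: "l * t^(Suc (Suc i)) = (t^2 + 1) * t^(Suc i)"
    using t unfolding l_def by (simp add: field_simps power2_eq_square)
  have "X e l (Suc (Suc i)) * (1 - t^2) * t^(Suc (Suc i))
      = (t^2 + 1) * (X e l (Suc i) * (1 - t^2) * t^(Suc i)) - t^2 * (X e l i * (1 - t^2) * t^i)"
  proof -
    have "X e l (Suc (Suc i)) * (1 - t^2) * t^(Suc (Suc i))
        = X e l (Suc i) * (1 - t^2) * (l * t^(Suc (Suc i))) - X e l i * (1 - t^2) * (t^2 * t^i)"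
      by (simp add: algebra_simps power2_eq_square)
    then show ?thesis unfolding lt by (simp add: algebra_simps)
  qed
  also have "\<dots> = (t^2 + 1) * ((1 - e*t) + t*(e-t)*(t^Suc i*t^Suc i)) - t^2 * ((1 - e*t) + t*(e-t)*(t^i*t^i))"
    using Suc.IH unfolding l_def[symmetric] by (simp only:)
  also have "\<dots> = (1 - e*t) + t*(e-t)*(t^Suc (Suc i)*t^Suc (Suc i))"
    by (simp add: algebra_simps power2_eq_square)
  finally show ?case using Suc.IH unfolding l_def by simp
qed

lemma Xt:
  assumes "t \<noteq> 0"
  shows "X e (t + 1/t) i * (1 - t^2) * t^i = (1 - e*t) + t*(e-t)*(t^i*t^i)"
  using Xt_pair[OF assms] by blast

lemma Xtrig_pair:
  shows "X e (2 * cos th) i * sin th = sin ((real i + 1) * th) - e * sin (real i * th)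
       \<and> X e (2 * cos th) (Suc i) * sin th = sin ((real (Suc i) + 1) * th) - e * sin (real (Suc i) * th)"
proof (induction i)
  case 0
  have "sin (2 * th) = 2 * sin th * cos th" by (rule sin_double)
  then show ?case by (simp add: algebra_simps)
next
  case (Suc i)
  have rec: "sin (a + th) = 2 * cos th * sin a - sin (a - th)" for a
    by (simp add: sin_add sin_diff)
  have r1: "sin ((real (Suc (Suc i)) + 1) * th) = 2 * cos th * sin ((real (Suc i) + 1) * th) - sin ((real i + 1) * th)"
    using rec[of "(real (Suc i) + 1) * th"] by (simp add: algebra_simps)
  have r2: "sin (real (Suc (Suc i)) * th) = 2 * cos th * sin (real (Suc i) * th) - sin (real i * th)"
    using rec[of "real (Suc i) * th"] by (simp add: algebra_simps)
  have "X e (2 * cos th) (Suc (Suc i)) * sin th = 2 * cos th * (X e (2 * cos th) (Suc i) * sin th) - X e (2 * cos th) i * sin th"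
    by (simp add: algebra_simps)
  also have "\<dots> = 2 * cos th * (sin ((real (Suc i) + 1) * th) - e * sin (real (Suc i) * th)) - (sin ((real i + 1) * th) - e * sin (real i * th))"
    using Suc.IH by (simp only:)
  also have "\<dots> = sin ((real (Suc (Suc i)) + 1) * th) - e * sin (real (Suc (Suc i)) * th)"
    unfolding r1 r2 by (simp add: algebra_simps)
  finally show ?case using Suc.IH by simp
qed

lemma Xtrig: "X e (2 * cos th) i * sin th = sin ((real i + 1) * th) - e * sin (real i * th)"
  using Xtrig_pair by blast

lemma Xmirror_pair: "X (-e) (-l) i = (-1)^i * X e l i \<and> X (-e) (-l) (Suc i) = (-1)^(Suc i) * X e l (Suc i)"
  by (induction i) (auto simp: algebra_simps)

lemma D_mirror: "n \<ge> 1 \<Longrightarrow> D n (-e) (-l) = (-1)^n * D n e l"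
proof -
  assume "n \<ge> 1"
  then obtain m where m: "n = Suc m" by (cases n) auto
  show ?thesis unfolding D_def m using Xmirror_pair[of e l m] by (auto simp: algebra_simps)
qed

lemma Dt:
  assumes t: "t \<noteq> 0" and n: "n \<ge> 1"
  shows "D n e (t + 1/t) * ((1 - t^2) * t^n) = F n e 1 t * F n e (-1) t"
proof -
  obtain m where m: "n = Suc m" using n by (cases n) auto
  have h1: "X e (t + 1/t) (Suc m) * (1 - t^2) * t^(Suc m) = (1 - e*t) + t*(e-t)*(t^Suc m*t^Suc m)"
    using Xt[OF t] .
  have h2: "X e (t + 1/t) m * (1 - t^2) * t^m = (1 - e*t) + t*(e-t)*(t^m*t^m)"
    using Xt[OF t] .
  have "D n e (t + 1/t) * ((1 - t^2) * t^n) = X e (t + 1/t) (Suc m) * (1 - t^2) * t^(Suc m)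
       - e * t * (X e (t + 1/t) m * (1 - t^2) * t^m)"
    unfolding D_def m by (simp add: algebra_simps)
  also have "\<dots> = F n e 1 t * F n e (-1) t"
    unfolding h1 h2 F_def m by (simp add: algebra_simps power2_eq_square)
  finally show ?thesis .
qed

lemma Xroot:
  assumes t: "t \<noteq> 0" "t^2 \<noteq> 1" and F: "F n e \<sigma> t = 0" and i: "i < n"
  shows "X e (t + 1/t) i = t*(e-t)/(1-t^2) * (t^i + \<sigma> * t^(n-1-i))"
proof -
  have a: "1 - e*t = \<sigma> * (e - t) * t^n" using F unfolding F_def by simp
  have tn: "t^n = t * (t^i * t^(n-1-i))"
    using i by (simp add: power_add[symmetric] power_Suc[symmetric])
  have "X e (t + 1/t) i * ((1 - t^2) * t^i) = t*(e-t)/(1-t^2) * (t^i + \<sigma> * t^(n-1-i)) * ((1 - t^2) * t^i)"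
  proof -
    have "X e (t + 1/t) i * ((1 - t^2) * t^i) = \<sigma> * (e - t) * t^n + t*(e-t)*(t^i*t^i)"
      using Xt[OF t(1), of e i] a by (simp add: algebra_simps)
    also have "\<dots> = t*(e-t) * (t^i + \<sigma> * t^(n-1-i)) * t^i"
      unfolding tn by (simp add: algebra_simps)
    also have "\<dots> = t*(e-t)/(1-t^2) * (t^i + \<sigma> * t^(n-1-i)) * ((1 - t^2) * t^i)"
      using t by (simp add: field_simps)
    finally show ?thesis .
  qed
  moreover have "(1 - t^2) * t^i \<noteq> 0" using t by simp
  ultimately show ?thesis using mult_right_cancel by blast
qed

lemma X_lam0: assumes "\<bar>e\<bar> > 1" shows "X e (e + 1/e) i = (1/e)^i"
proof -
  define t where "t = 1/e"
  have t: "t \<noteq> 0" using assms unfolding t_def by auto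
  have et: "e * t = 1" using assms unfolding t_def by auto
  have lam: "e + 1/e = t + 1/t" unfolding t_def by simp
  have h: "X e (t + 1/t) i * (1 - t^2) * t^i = (1 - e*t) + t*(e-t)*(t^i*t^i)"
    using Xt[OF t] .
  have "\<bar>t\<bar> < 1" using assms unfolding t_def by (simp add: abs_divide divide_less_eq)
  then have "t^2 < 1" by (simp add: abs_square_less_1)
  then have nz: "(1 - t^2) * t^i \<noteq> 0" using t by simp
  have "t*(e-t) = 1 - t^2" using et by (simp add: algebra_simps power2_eq_square)
  then have "X e (t + 1/t) i * ((1 - t^2) * t^i) = t^i * ((1 - t^2) * t^i)"
    using h et by (simp add: algebra_simps)
  then show ?thesis using nz mult_right_cancel unfolding lam t_def by blast
qed

lemma pow_diff_bound:
  fixes a b r :: real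
  assumes "\<bar>a\<bar> \<le> r" "\<bar>b\<bar> \<le> r"
  shows "\<bar>a^n - b^n\<bar> \<le> real n * r^(n-1) * \<bar>a - b\<bar>"
proof (induction n)
  case 0 then show ?case by simp
next
  case (Suc n)
  have r0: "0 \<le> r" using assms by linarith
  have "a^Suc n - b^Suc n = a * (a^n - b^n) + b^n * (a - b)" by (simp add: algebra_simps)
  then have "\<bar>a^Suc n - b^Suc n\<bar> \<le> \<bar>a\<bar> * \<bar>a^n - b^n\<bar> + \<bar>b\<bar>^n * \<bar>a - b\<bar>"
    by (metis abs_mult abs_triangle_ineq power_abs)
  also have "\<dots> \<le> r * (real n * r^(n-1) * \<bar>a - b\<bar>) + r^n * \<bar>a - b\<bar>"
    by (intro add_mono mult_mono Suc.IH power_mono assms) (auto simp: r0)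
  also have "r * (real n * r^(n-1) * \<bar>a - b\<bar>) = real n * r^n * \<bar>a - b\<bar>"
    by (cases n) (auto simp: algebra_simps)
  finally show ?case by (simp add: algebra_simps)
qed

lemma geo1: "n \<ge> 1 \<Longrightarrow> (1 - x) * (\<Sum>k\<in>{1..<n}. x^k) = x - (x::real)^n"
proof (induction n rule: nat_induct_at_least)
  case base then show ?case by simp
next
  case (Suc n)
  have "(1 - x) * (\<Sum>k\<in>{1..<Suc n}. x^k) = (1 - x) * (\<Sum>k\<in>{1..<n}. x^k) + (1 - x) * x^n"
    using Suc.hyps by (simp add: algebra_simps)
  also have "\<dots> = x - x^n + (1 - x) * x^n" using Suc by simp
  also have "\<dots> = x - x^Suc n" by (simp add: algebra_simps)
  finally show ?case .
qed

lemma far_pos: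
  fixes e d :: real
  assumes e: "e > 1" and d: "d > 0"
  shows "\<forall>\<^sub>F n in sequentially. \<forall>t. 0 < \<bar>t\<bar> \<and> \<bar>t\<bar> < 1 \<and> d \<le> \<bar>t - 1/e\<bar> \<longrightarrow> \<bar>e - t\<bar> * \<bar>t\<bar>^n < \<bar>1 - e*t\<bar>"
proof -
  define s where "s = 1/e"
  have s: "0 < s" "s < 1" "e * s = 1" using e unfolding s_def by auto
  define q where "q = (e - 1) / (2 * (e + 3))"
  define r where "r = 1 - q"
  have q: "0 < q" "q < 1" "(e + 3) * q = (e - 1) / 2" using e unfolding q_def by (auto simp: field_simps)
  have r01: "0 < r" "r < 1" using q unfolding r_def by auto
  have "(e - 1) * r - 4 * (1 - r) = (e - 1) - (e + 3) * q" unfolding r_def by (simp add: algebra_simps)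
  then have "(e - 1) * r - 4 * (1 - r) = (e - 1) - (e - 1) / 2" unfolding q(3) .
  moreover have "(e - 1) - (e - 1) / 2 > 0" using e by simp
  ultimately have "(e - 1) * r - 4 * (1 - r) > 0" by linarith
  then have r: "0 < r" "r < 1" "(e - 1) * r > 4 * (1 - r)" using r01 by (simp_all only: diff_gt_0_iff_gt)
  have "(\<lambda>n. s^n) \<longlonglongrightarrow> 0" by (rule LIMSEQ_power_zero) (use s in simp)
  from order_tendstoD(2)[OF this d] have ev1: "\<forall>\<^sub>F n in sequentially. s^n < d" .
  have "(\<lambda>n. r^n) \<longlonglongrightarrow> 0" by (rule LIMSEQ_power_zero) (use r in simp)
  from order_tendstoD(2)[OF this, of "min d (r/2)"] have ev2: "\<forall>\<^sub>F n in sequentially. r^n < min d (r/2)"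
    using r d by simp
  have ev3: "\<forall>\<^sub>F n in sequentially. n \<ge> 1" by (rule eventually_ge_at_top)
  show ?thesis using ev1 ev2 ev3
  proof eventually_elim
    case (elim n)
    show ?case
    proof (intro allI impI, elim conjE)
      fix t assume t0: "0 < \<bar>t\<bar>" and t1: "\<bar>t\<bar> < 1" and td: "d \<le> \<bar>t - 1/e\<bar>"
      have tn_pos: "\<bar>t\<bar>^n \<le> \<bar>t\<bar>" using power_decreasing[of 1 n "\<bar>t\<bar>"] elim(3) t1 by simp
      consider (neg) "t < 0" | (small) "0 < t" "t \<le> s - d" | (mid) "s + d \<le> t" "t \<le> r" | (big) "s + d \<le> t" "r \<le> t"
      proof -
        have A: "t \<le> s - d \<or> s + d \<le> t" using td unfolding s_def[symmetric] by (auto simp: abs_if split: if_split_asm)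
        have B: "t < 0 \<or> 0 < t" using t0 by auto
        show ?thesis using A B that by (smt (verit))
      qed
      then show "\<bar>e - t\<bar> * \<bar>t\<bar>^n < \<bar>1 - e*t\<bar>"
      proof cases
        case neg
        have "\<bar>e - t\<bar> * \<bar>t\<bar>^n \<le> (e - t) * \<bar>t\<bar>"
          using neg e tn_pos by (intro mult_mono) auto
        also have "\<dots> = e * \<bar>t\<bar> + \<bar>t\<bar> * \<bar>t\<bar>" using neg by (simp add: algebra_simps)
        also have "\<dots> < e * \<bar>t\<bar> + 1" using mult_strict_mono[of "\<bar>t\<bar>" 1 "\<bar>t\<bar>" 1] t1 by simp
        also have "\<dots> = \<bar>1 - e*t\<bar>" using neg e mult_pos_neg[of e t] by (simp add: abs_if algebra_simps)
        finally show ?thesis .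
      next
        case small
        have "\<bar>e - t\<bar> = e - t" "\<bar>t\<bar> = t" using small e t1 by auto
        then have "\<bar>e - t\<bar> * \<bar>t\<bar>^n = (e - t) * t^n" by simp
        also have "\<dots> \<le> e * s^n"
          using small e s d by (intro mult_mono power_mono) auto
        also have "\<dots> < e * d" using elim(1) e by simp
        also have "\<dots> \<le> 1 - e * t"
        proof -
          have "e * t \<le> e * (s - d)" using small e by (intro mult_left_mono) auto
          then show ?thesis using s(3) by (simp add: algebra_simps)
        qed
        also have "\<dots> \<le> \<bar>1 - e*t\<bar>" by simp
        finally show ?thesis .
      next
        case mid
        have "\<bar>e - t\<bar> = e - t" "\<bar>t\<bar> = t" using mid e t1 s d by auto
        then have "\<bar>e - t\<bar> * \<bar>t\<bar>^n = (e - t) * t^n" by simp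
        also have "\<dots> \<le> e * r^n"
          using mid e s d by (intro mult_mono power_mono) auto
        also have "\<dots> < e * d" using elim(2) e by simp
        also have "\<dots> \<le> e * t - 1"
        proof -
          have "e * (s + d) \<le> e * t" using mid e by (intro mult_left_mono) auto
          then show ?thesis using s(3) by (simp add: algebra_simps)
        qed
        also have "\<dots> \<le> \<bar>1 - e*t\<bar>" by simp
        finally show ?thesis .
      next
        case big
        have tpos: "0 < t" "t < 1" using big r t1 by auto
        define S where "S = (\<Sum>k\<in>{1..<n}. t^k)"
        define Sr where "Sr = (\<Sum>k\<in>{1..<n}. r^k)"
        have gS: "(1 - t) * S = t - t^n" unfolding S_def using geo1 elim(3) by blast
        have gSr: "(1 - r) * Sr = r - r^n" unfolding Sr_def using geo1 elim(3) by blast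
        have SSr: "Sr \<le> S" unfolding S_def Sr_def
          using big r by (intro sum_mono power_mono) auto
        have "(1 - r) * Sr > r / 2" using gSr elim(2) by simp
        then have "Sr > r / (2 * (1 - r))" using r by (simp add: field_simps)
        moreover have "(e - 1) * (r / (2 * (1 - r))) > 2" using r by (simp add: field_simps)
        ultimately have "(e - 1) * Sr > (e - 1) * (r / (2 * (1 - r)))" using e
          by (intro mult_strict_left_mono) auto
        then have "(e - 1) * Sr > 2" using \<open>(e - 1) * (r / (2 * (1 - r))) > 2\<close> by linarith
        moreover have "(e - 1) * Sr \<le> (e - 1) * S" using SSr e by (intro mult_left_mono) auto
        ultimately have "(e - 1) * S > 2" by linarith
        moreover have "t^n \<le> 1" using tpos by (simp add: power_le_one)
        ultimately have pos: "(e - 1) * S - 1 - t^n > 0" by simp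
        have "e * t - 1 - (e - t) * t^n = (1 - t) * ((e - 1) * S - 1 - t^n)"
        proof -
          have "(1 - t) * ((e - 1) * S - 1 - t^n) = (e - 1) * ((1 - t) * S) - (1 - t) * (1 + t^n)"
            by (simp add: algebra_simps)
          also have "\<dots> = e * t - 1 - (e - t) * t^n" unfolding gS by (simp add: algebra_simps)
          finally show ?thesis by simp
        qed
        also have "\<dots> > 0" using pos tpos by simp
        finally have "(e - t) * t^n < e * t - 1" by simp
        moreover have "\<bar>e - t\<bar> = e - t" "\<bar>t\<bar> = t" using tpos e by auto
        moreover have "e * t - 1 \<le> \<bar>1 - e*t\<bar>" by simp
        ultimately show ?thesis by simp
      qed
    qed
  qed
qed



lemma far:
  fixes e d :: real
  assumes e: "\<bar>e\<bar> > 1" and d: "d > 0"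
  shows "\<forall>\<^sub>F n in sequentially. \<forall>t. 0 < \<bar>t\<bar> \<and> \<bar>t\<bar> < 1 \<and> d \<le> \<bar>t - 1/e\<bar> \<longrightarrow> \<bar>e - t\<bar> * \<bar>t\<bar>^n < \<bar>1 - e*t\<bar>"
proof (cases "e > 0")
  case True
  then have "e > 1" using e by simp
  then show ?thesis using far_pos d by blast
next
  case False
  then have "-e > 1" using e by simp
  from far_pos[OF this d] show ?thesis
  proof eventually_elim
    case (elim n)
    show ?case
    proof (intro allI impI)
      fix t assume h: "0 < \<bar>t\<bar> \<and> \<bar>t\<bar> < 1 \<and> d \<le> \<bar>t - 1/e\<bar>"
      have "\<bar>-t - 1/(-e)\<bar> = \<bar>t - 1/e\<bar>" by (simp add: abs_minus_commute)
      then have "\<bar>-e - -t\<bar> * \<bar>-t\<bar>^n < \<bar>1 - (-e)*(-t)\<bar>" using elim[rule_format, of "-t"] h by simp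
      then show "\<bar>e - t\<bar> * \<bar>t\<bar>^n < \<bar>1 - e*t\<bar>" by (simp add: abs_minus_commute)
    qed
  qed
qed

lemma F_far:
  fixes e d :: real
  assumes e: "\<bar>e\<bar> > 1" and d: "d > 0"
  shows "\<forall>\<^sub>F n in sequentially. \<forall>\<sigma> t. \<bar>\<sigma>\<bar> = 1 \<and> 0 < \<bar>t\<bar> \<and> \<bar>t\<bar> < 1 \<and> F n e \<sigma> t = 0 \<longrightarrow> \<bar>t - 1/e\<bar> < d"
  using far[OF e d]
proof eventually_elim
  case (elim n)
  show ?case
  proof (intro allI impI, elim conjE)
    fix \<sigma> t assume s: "\<bar>\<sigma>\<bar> = 1" and t: "0 < \<bar>t\<bar>" "\<bar>t\<bar> < 1" and F: "F n e \<sigma> t = 0"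
    have "1 - e * t = \<sigma> * (e - t) * t^n" using F unfolding F_def by simp
    then have eq: "\<bar>1 - e * t\<bar> = \<bar>e - t\<bar> * \<bar>t\<bar>^n" using s by (simp add: abs_mult power_abs)
    show "\<bar>t - 1/e\<bar> < d"
    proof (rule ccontr)
      assume "\<not> \<bar>t - 1/e\<bar> < d"
      then have "\<bar>e - t\<bar> * \<bar>t\<bar>^n < \<bar>1 - e*t\<bar>" using elim t by simp
      then show False using eq by simp
    qed
  qed
qed

definition sdl :: "real \<Rightarrow> real" where "sdl e = min (\<bar>1/e\<bar>/2) ((1 - \<bar>1/e\<bar>)/2)"
definition rr :: "real \<Rightarrow> real" where "rr e = (1 + \<bar>1/e\<bar>)/2"

lemma sdl_rr:
  assumes "\<bar>e\<bar> > 1"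
  shows "sdl e > 0" "0 < rr e" "rr e < 1"
proof -
  define u where "u = \<bar>1/e\<bar>"
  have u: "u < 1" "u > 0" using assms unfolding u_def by (auto simp: abs_divide divide_less_eq)
  have "sdl e = min (u/2) ((1-u)/2)" "rr e = (1 + u)/2" unfolding sdl_def rr_def u_def by simp_all
  then show "sdl e > 0" "0 < rr e" "rr e < 1" using u by auto
qed

lemma win_aux:
  fixes c t :: real
  assumes "\<bar>c\<bar> < 1" "0 < \<bar>c\<bar>" "\<bar>t - c\<bar> \<le> min (\<bar>c\<bar>/2) ((1-\<bar>c\<bar>)/2)"
  shows "0 < \<bar>t\<bar> \<and> \<bar>t\<bar> \<le> (1+\<bar>c\<bar>)/2"
proof -
  have tr0: "\<bar>t\<bar> \<le> \<bar>t - c\<bar> + \<bar>c\<bar>" "\<bar>c\<bar> \<le> \<bar>t\<bar> + \<bar>t - c\<bar>"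
    using abs_triangle_ineq[of "t - c" c] abs_triangle_ineq[of "c - t" t]
    by (simp_all add: abs_minus_commute)
  have "\<bar>t - c\<bar> \<le> \<bar>c\<bar>/2" "\<bar>t - c\<bar> \<le> (1-\<bar>c\<bar>)/2" using assms(3) by auto
  moreover have "\<And>a b d::real. d \<le> b/2 \<Longrightarrow> d \<le> (1-b)/2 \<Longrightarrow> a \<le> d + b \<Longrightarrow> b \<le> a + d \<Longrightarrow> b < 1 \<Longrightarrow> 0 < b \<Longrightarrow> 0 < a \<and> a \<le> (1+b)/2"
    unfolding add_divide_distrib diff_divide_distrib by (rule conjI; linarith)
  ultimately show ?thesis using tr0 assms(1,2) by blast
qed

lemma win:
  assumes "\<bar>e\<bar> > 1" "\<bar>t - 1/e\<bar> \<le> sdl e"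
  shows "0 < \<bar>t\<bar>" "\<bar>t\<bar> \<le> rr e" "\<bar>t\<bar> < 1"
proof -
  have u: "\<bar>1/e\<bar> < 1" "\<bar>1/e\<bar> > 0" using assms by (auto simp: abs_divide divide_less_eq)
  have "0 < \<bar>t\<bar> \<and> \<bar>t\<bar> \<le> (1+\<bar>1/e\<bar>)/2"
    by (rule win_aux[OF u]) (use assms(2) in \<open>simp only: sdl_def\<close>)
  then show "0 < \<bar>t\<bar>" "\<bar>t\<bar> \<le> rr e" unfolding rr_def by auto
  then show "\<bar>t\<bar> < 1" using sdl_rr[OF assms(1)] by simp
qed

lemma F_cont: "continuous_on A (\<lambda>t. F n e \<sigma> t)"
  unfolding F_def by (intro continuous_intros)

lemma exists_root:
  fixes e :: real
  assumes e: "\<bar>e\<bar> > 1"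
  shows "\<forall>\<^sub>F n in sequentially. \<forall>\<sigma>. \<bar>\<sigma>\<bar> = 1 \<longrightarrow> (\<exists>t. \<bar>t - 1/e\<bar> < sdl e \<and> F n e \<sigma> t = 0)"
proof -
  define r where "r = rr e"
  define d where "d = sdl e / 2"
  have r: "0 < r" "r < 1" using sdl_rr[OF e] unfolding r_def by auto
  have d: "d > 0" "d < sdl e" using sdl_rr[OF e] unfolding d_def by auto
  have "(\<lambda>n. (\<bar>e\<bar> + 1) * r^n) \<longlonglongrightarrow> (\<bar>e\<bar> + 1) * 0"
    by (intro tendsto_mult tendsto_const LIMSEQ_power_zero) (use r in simp)
  moreover have "\<bar>e\<bar> * d > 0" using d e by simp
  ultimately have ev: "\<forall>\<^sub>F n in sequentially. (\<bar>e\<bar> + 1) * r^n < \<bar>e\<bar> * d"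
    by (intro order_tendstoD(2)) auto
  show ?thesis using ev
  proof eventually_elim
    case (elim n)
    show ?case
    proof (intro allI impI)
      fix \<sigma> :: real assume s: "\<bar>\<sigma>\<bar> = 1"
      define a where "a = 1/e - d"
      define b where "b = 1/e + d"
      have bound: "\<bar>\<sigma> * (e - t) * t^n\<bar> < \<bar>e\<bar> * d" if "\<bar>t - 1/e\<bar> = d" for t
      proof -
        have t: "\<bar>t\<bar> \<le> r" "\<bar>t\<bar> < 1" using win[OF e, of t] that d unfolding r_def by auto
        have "\<bar>\<sigma> * (e - t) * t^n\<bar> = \<bar>e - t\<bar> * \<bar>t\<bar>^n" using s by (simp add: abs_mult power_abs)
        also have "\<dots> \<le> (\<bar>e\<bar> + 1) * r^n"
          using t by (intro mult_mono power_mono) auto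
        finally show ?thesis using elim by simp
      qed
      have Fa: "F n e \<sigma> a = e * d - \<sigma> * (e - a) * a^n" unfolding F_def a_def using e
        by (auto simp: algebra_simps)
      have Fb: "F n e \<sigma> b = - e * d - \<sigma> * (e - b) * b^n" unfolding F_def b_def using e
        by (auto simp: algebra_simps)
      have ba: "\<bar>\<sigma> * (e - a) * a^n\<bar> < \<bar>e\<bar> * d" "\<bar>\<sigma> * (e - b) * b^n\<bar> < \<bar>e\<bar> * d"
        using bound d unfolding a_def b_def by auto
      have ab: "a \<le> b" unfolding a_def b_def using d by simp
      have "\<exists>x. a \<le> x \<and> x \<le> b \<and> F n e \<sigma> x = 0"
      proof (cases "e > 0")
        case True
        have "F n e \<sigma> b \<le> 0" "0 \<le> F n e \<sigma> a" using Fa Fb ba True by (auto simp: abs_less_iff)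
        then show ?thesis using IVT2'[of "F n e \<sigma>" b 0 a, OF _ _ ab F_cont] by auto
      next
        case False
        then have "e < 0" using e by auto
        then have "F n e \<sigma> a \<le> 0" "0 \<le> F n e \<sigma> b" using Fa Fb ba by (auto simp: abs_less_iff)
        then show ?thesis using IVT'[of "F n e \<sigma>" a 0 b, OF _ _ ab F_cont] by auto
      qed
      then obtain x where x: "a \<le> x" "x \<le> b" "F n e \<sigma> x = 0" by blast
      have "\<bar>x - 1/e\<bar> < sdl e" using x d unfolding a_def b_def by auto
      then show "\<exists>t. \<bar>t - 1/e\<bar> < sdl e \<and> F n e \<sigma> t = 0" using x by blast
    qed
  qed
qed

lemma unique_root:
  fixes e :: real
  assumes e: "\<bar>e\<bar> > 1"
  shows "\<forall>\<^sub>F n in sequentially. \<forall>\<sigma> t1 t2. \<bar>\<sigma>\<bar> = 1 \<and> \<bar>t1 - 1/e\<bar> \<le> sdl e \<and> \<bar>t2 - 1/e\<bar> \<le> sdl e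
      \<and> F n e \<sigma> t1 = 0 \<and> F n e \<sigma> t2 = 0 \<longrightarrow> t1 = t2"
proof -
  define r where "r = rr e"
  have r: "0 < r" "r < 1" using sdl_rr[OF e] unfolding r_def by auto
  define K where "K n = \<bar>e\<bar> * (real n * r^n / r) + (real n * r^n + r^n)" for n
  have "(\<lambda>n. real n * r^n) \<longlonglongrightarrow> 0" using powser_times_n_limit_0[of r] r by simp
  then have "K \<longlonglongrightarrow> \<bar>e\<bar> * (0 / r) + (0 + 0)" unfolding K_def
    by (intro tendsto_intros LIMSEQ_power_zero) (use r in auto)
  then have "K \<longlonglongrightarrow> 0" by simp
  moreover have "\<bar>e\<bar> > 0" using e by simp
  ultimately have ev: "\<forall>\<^sub>F n in sequentially. K n < \<bar>e\<bar>"
    by (rule order_tendstoD(2))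
  show ?thesis using ev
  proof eventually_elim
    case (elim n)
    show ?case
    proof (intro allI impI, elim conjE)
      fix \<sigma> t1 t2 assume s: "\<bar>\<sigma>\<bar> = 1" and w1: "\<bar>t1 - 1/e\<bar> \<le> sdl e" and w2: "\<bar>t2 - 1/e\<bar> \<le> sdl e"
        and F1: "F n e \<sigma> t1 = 0" and F2: "F n e \<sigma> t2 = 0"
      have a1: "\<bar>t1\<bar> \<le> r" using win[OF e w1] unfolding r_def by simp
      have a2: "\<bar>t2\<bar> \<le> r" using win[OF e w2] unfolding r_def by simp
      have "F n e \<sigma> t1 - F n e \<sigma> t2 = - e * (t1 - t2) - \<sigma> * (e * (t1^n - t2^n) - (t1^Suc n - t2^Suc n))"
        unfolding F_def by (simp add: algebra_simps)
      then have "e * (t1 - t2) = - \<sigma> * (e * (t1^n - t2^n) - (t1^Suc n - t2^Suc n))"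
        using F1 F2 by simp
      moreover define W where "W = e * (t1^n - t2^n) - (t1^Suc n - t2^Suc n)"
      ultimately have "e * (t1 - t2) = - \<sigma> * W" by simp
      then have "\<bar>e * (t1 - t2)\<bar> = \<bar>- \<sigma> * W\<bar>" by (rule arg_cong)
      then have "\<bar>e\<bar> * \<bar>t1 - t2\<bar> = \<bar>W\<bar>"
        using s by (simp only: abs_mult abs_minus mult_1)
      then have "\<bar>e\<bar> * \<bar>t1 - t2\<bar> = \<bar>e * (t1^n - t2^n) - (t1^Suc n - t2^Suc n)\<bar>"
        unfolding W_def .
      also have "\<dots> \<le> \<bar>e\<bar> * \<bar>t1^n - t2^n\<bar> + \<bar>t1^Suc n - t2^Suc n\<bar>"
        by (metis abs_mult abs_triangle_ineq4)
      also have "\<dots> \<le> \<bar>e\<bar> * (real n * r^(n-1) * \<bar>t1 - t2\<bar>) + real (Suc n) * r^(Suc n - 1) * \<bar>t1 - t2\<bar>"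
        by (intro add_mono mult_left_mono pow_diff_bound a1 a2) auto
      also have "\<dots> = K n * \<bar>t1 - t2\<bar>"
      proof -
        have "real n * r^(n-1) = real n * r^n / r" using r by (cases n) auto
        then show ?thesis unfolding K_def by (simp add: algebra_simps)
      qed
      finally have le: "\<bar>e\<bar> * \<bar>t1 - t2\<bar> \<le> K n * \<bar>t1 - t2\<bar>" .
      show "t1 = t2"
      proof (rule ccontr)
        assume "t1 \<noteq> t2"
        then have "\<bar>t1 - t2\<bar> > 0" by simp
        then have "\<bar>e\<bar> \<le> K n" using le by simp
        then show False using elim by simp
      qed
    qed
  qed
qed



lemma sq_sum_le: "((p::real) + q)^2 \<le> 2 * p^2 + 2 * q^2"
proof -
  have "0 \<le> (p - q)^2" by simp
  then show ?thesis by (simp add: power2_eq_square algebra_simps)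
qed

lemma geo_le:
  fixes r :: real assumes "0 \<le> r" "r < 1"
  shows "(\<Sum>i<n. r^i) \<le> 1/(1-r)"
proof -
  have "(\<Sum>i<n. r^i) = (1 - r^n)/(1-r)" using assms by (simp add: sum_gp_strict)
  also have "\<dots> \<le> 1/(1-r)" using assms by (intro divide_right_mono) auto
  finally show ?thesis .
qed

lemma nr_bound:
  fixes r :: real assumes "0 \<le> r" "r < 1"
  shows "real i * r^(i-1) \<le> 1/(1-r)"
proof -
  have "real i * r^(i-1) = (\<Sum>k<i. r^(i-1))" by simp
  also have "\<dots> \<le> (\<Sum>k<i. r^k)"
    using assms by (intro sum_mono power_decreasing) auto
  also have "\<dots> \<le> 1/(1-r)" by (rule geo_le[OF assms])
  finally show ?thesis .
qed

lemma best_approx: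
  fixes x u :: "nat \<Rightarrow> real"
  assumes B: "(\<Sum>i<n. u i * u i) > 0"
  shows "(\<Sum>i<n. (x i - proj n u x i)^2) \<le> (\<Sum>i<n. (x i - a * u i)^2)"
proof -
  define A where "A = (\<Sum>i<n. x i * u i)"
  define Bu where "Bu = (\<Sum>i<n. u i * u i)"
  define Sx where "Sx = (\<Sum>i<n. x i * x i)"
  define b where "b = A / Bu"
  have p: "proj n u x i = b * u i" for i unfolding proj_def b_def A_def Bu_def by simp
  have ex: "(\<Sum>i<n. (x i - c * u i)^2) = Sx - 2 * c * A + c^2 * Bu" for c
  proof -
    have "(\<Sum>i<n. (x i - c * u i)^2) = (\<Sum>i<n. x i * x i - 2 * c * (x i * u i) + c^2 * (u i * u i))"
      by (intro sum.cong) (auto simp: power2_eq_square algebra_simps)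
    also have "\<dots> = Sx - 2 * c * A + c^2 * Bu"
      unfolding Sx_def A_def Bu_def by (simp add: sum.distrib sum_subtractf sum_distrib_left)
    finally show ?thesis .
  qed
  have bB: "b * Bu = A" unfolding b_def using B Bu_def by simp
  have "(Sx - 2 * a * A + a^2 * Bu) - (Sx - 2 * b * A + b^2 * Bu) = Bu * (a - b)^2"
    unfolding bB[symmetric] by (simp add: power2_eq_square algebra_simps)
  moreover have "Bu * (a - b)^2 \<ge> 0" using B Bu_def by simp
  ultimately show ?thesis unfolding p ex by linarith
qed

lemma sum_sq_pos:
  fixes u :: "nat \<Rightarrow> real"
  assumes "0 < n" "u 0 \<noteq> 0"
  shows "u 0 * u 0 \<le> (\<Sum>i<n. u i * u i)" "(\<Sum>i<n. u i * u i) > 0"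
proof -
  show *: "u 0 * u 0 \<le> (\<Sum>i<n. u i * u i)"
    by (rule member_le_sum[where f="\<lambda>i. u i * u i"]) (use assms in auto)
  have "u 0 * u 0 > 0" using assms(2) not_real_square_gt_zero by blast
  then show "(\<Sum>i<n. u i * u i) > 0" using * by linarith
qed

lemma proj_bound:
  fixes x :: "nat \<Rightarrow> real" and t s r c \<sigma> :: real
  assumes n: "n \<ge> 2" and r: "0 \<le> r" "r < 1" and tr: "\<bar>t\<bar> \<le> r" and sr: "\<bar>s\<bar> \<le> r"
    and sg: "\<bar>\<sigma>\<bar> = 1"
    and x: "\<And>i. i < n \<Longrightarrow> x i = c * (t^i + \<sigma> * t^(n-1-i))"
    and nx: "(\<Sum>i<n. (x i)^2) = 1"
  shows "(\<Sum>i<n. (x i - proj n (\<lambda>i. s^i + \<sigma> * s^(n-1-i)) x i)^2) \<le> 8 / (1-r)^4 * \<bar>t - s\<bar>"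
proof -
  define u where "u i = s^i + \<sigma> * s^(n-1-i)" for i
  define U where "U i = t^i + \<sigma> * t^(n-1-i)" for i
  have s2: "\<sigma> * \<sigma> = 1" using sg by (metis abs_mult_self_eq mult_1)
  have rp: "1 - r > 0" using r by simp
  have pw: "\<bar>y\<bar>^(n-1) \<le> r" if "\<bar>y\<bar> \<le> r" for y
  proof -
    have "\<bar>y\<bar> \<le> 1" using that r by simp
    then have "\<bar>y\<bar>^(n-1) \<le> \<bar>y\<bar>^1" using n by (intro power_decreasing) auto
    then show ?thesis using that by simp
  qed
  have lowU: "\<bar>1 + \<sigma> * y^(n-1)\<bar> \<ge> 1 - r" if "\<bar>y\<bar> \<le> r" for y
  proof -
    have "\<bar>\<sigma> * y^(n-1)\<bar> \<le> r" using pw[OF that] sg by (simp add: abs_mult power_abs)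
    then show ?thesis by linarith
  qed
  have u0: "u 0 \<noteq> 0" using lowU[OF sr] rp unfolding u_def by auto
  have Bpos: "(\<Sum>i<n. u i * u i) > 0" using sum_sq_pos(2)[of n u, OF _ u0] n by simp
  have "(\<Sum>i<n. (x i - proj n u x i)^2) \<le> (\<Sum>i<n. (x i - c * u i)^2)"
    by (rule best_approx[OF Bpos])
  also have "\<dots> = c^2 * (\<Sum>i<n. (U i - u i)^2)"
    unfolding sum_distrib_left
    by (intro sum.cong refl) (simp add: x U_def power2_eq_square algebra_simps)
  also have "(\<Sum>i<n. (U i - u i)^2) \<le> 4 * (\<Sum>i<n. (t^i - s^i)^2)"
  proof -
    have "(\<Sum>i<n. (U i - u i)^2) \<le> (\<Sum>i<n. 2 * (t^i - s^i)^2 + 2 * (t^(n - Suc i) - s^(n - Suc i))^2)"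
    proof (intro sum_mono)
      fix i
      have "(U i - u i)^2 = ((t^i - s^i) + \<sigma> * (t^(n - Suc i) - s^(n - Suc i)))^2"
        unfolding U_def u_def by (simp add: algebra_simps)
      also have "\<dots> \<le> 2 * (t^i - s^i)^2 + 2 * (\<sigma> * (t^(n - Suc i) - s^(n - Suc i)))^2"
        by (rule sq_sum_le)
      also have "(\<sigma> * (t^(n - Suc i) - s^(n - Suc i)))^2 = (t^(n - Suc i) - s^(n - Suc i))^2"
        using s2 by (simp add: power_mult_distrib power2_eq_square[of \<sigma>])
      finally show "(U i - u i)^2 \<le> 2 * (t^i - s^i)^2 + 2 * (t^(n - Suc i) - s^(n - Suc i))^2" .
    qed
    also have "\<dots> = 2 * (\<Sum>i<n. (t^i - s^i)^2) + 2 * (\<Sum>i<n. (t^(n - Suc i) - s^(n - Suc i))^2)"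
      by (simp add: sum.distrib sum_distrib_left)
    also have "(\<Sum>i<n. (t^(n - Suc i) - s^(n - Suc i))^2) = (\<Sum>i<n. (t^i - s^i)^2)"
      by (rule sum.nat_diff_reindex)
    finally show ?thesis by simp
  qed
  also have "(\<Sum>i<n. (t^i - s^i)^2) \<le> 2 / (1-r)^2 * \<bar>t - s\<bar>"
  proof -
    have "(\<Sum>i<n. (t^i - s^i)^2) \<le> (\<Sum>i<n. (\<bar>t - s\<bar> / (1-r)) * (2 * r^i))"
    proof (intro sum_mono)
      fix i
      have d1: "\<bar>t^i - s^i\<bar> \<le> \<bar>t - s\<bar> / (1-r)"
      proof -
        have "\<bar>t^i - s^i\<bar> \<le> real i * r^(i-1) * \<bar>t - s\<bar>" by (rule pow_diff_bound[OF tr sr])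
        also have "\<dots> \<le> 1/(1-r) * \<bar>t - s\<bar>" by (intro mult_right_mono nr_bound r) auto
        finally show ?thesis by simp
      qed
      have d2: "\<bar>t^i - s^i\<bar> \<le> 2 * r^i"
      proof -
        have "\<bar>t^i - s^i\<bar> \<le> \<bar>t\<bar>^i + \<bar>s\<bar>^i" by (metis abs_triangle_ineq4 power_abs)
        also have "\<dots> \<le> r^i + r^i" by (intro add_mono power_mono tr sr) auto
        finally show ?thesis by simp
      qed
      have "(t^i - s^i)^2 = \<bar>t^i - s^i\<bar> * \<bar>t^i - s^i\<bar>" by (simp add: power2_eq_square)
      also have "\<dots> \<le> (\<bar>t - s\<bar> / (1-r)) * (2 * r^i)"
        using d1 d2 rp by (intro mult_mono) auto
      finally show "(t^i - s^i)^2 \<le> (\<bar>t - s\<bar> / (1-r)) * (2 * r^i)" .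
    qed
    also have "\<dots> = (\<bar>t - s\<bar> / (1-r)) * 2 * (\<Sum>i<n. r^i)"
      by (simp add: sum_distrib_left mult.assoc)
    also have "\<dots> \<le> (\<bar>t - s\<bar> / (1-r)) * 2 * (1/(1-r))"
      using rp by (intro mult_left_mono geo_le r) auto
    also have "\<dots> = 2 / (1-r)^2 * \<bar>t - s\<bar>" by (simp add: power2_eq_square)
    finally show ?thesis .
  qed
  finally have main: "(\<Sum>i<n. (x i - proj n u x i)^2) \<le> c^2 * (4 * (2 / (1-r)^2 * \<bar>t - s\<bar>))"
    by (simp add: mult_left_mono)
  have c2: "c^2 \<le> 1/(1-r)^2"
  proof -
    have U0: "\<bar>U 0\<bar> \<ge> 1 - r" using lowU[OF tr] unfolding U_def by simp
    have "c^2 * (U 0 * U 0) \<le> c^2 * (\<Sum>i<n. U i * U i)"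
    proof -
      have "U 0 \<noteq> 0" using U0 rp by auto
      then have "U 0 * U 0 \<le> (\<Sum>i<n. U i * U i)" using sum_sq_pos(1)[of n U] n by simp
      then show ?thesis by (intro mult_left_mono) auto
    qed
    also have "c^2 * (\<Sum>i<n. U i * U i) = (\<Sum>i<n. (x i)^2)"
      unfolding sum_distrib_left by (intro sum.cong refl) (simp add: x U_def power2_eq_square)
    finally have "c^2 * (U 0 * U 0) \<le> 1" using nx by simp
    moreover have "(1-r)^2 \<le> U 0 * U 0"
    proof -
      have "(1-r)^2 \<le> \<bar>U 0\<bar>^2" by (rule power_mono[OF U0]) (use rp in simp)
      then show ?thesis by (simp add: power2_eq_square)
    qed
    then have "c^2 * (1-r)^2 \<le> c^2 * (U 0 * U 0)" by (intro mult_left_mono) auto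
    ultimately have "c^2 * (1-r)^2 \<le> 1" by linarith
    moreover have "(1-r)^2 > 0" using rp by simp
    ultimately show ?thesis by (simp add: le_divide_eq)
  qed
  have "c^2 * (4 * (2 / (1-r)^2 * \<bar>t - s\<bar>)) \<le> 1/(1-r)^2 * (4 * (2 / (1-r)^2 * \<bar>t - s\<bar>))"
    using c2 rp by (intro mult_right_mono) auto
  also have "\<dots> = 8 / ((1-r)^2)^2 * \<bar>t - s\<bar>" by (simp add: power2_eq_square)
  also have "((1-r)^2)^2 = (1-r)^4" by (simp flip: power_mult)
  finally show ?thesis using main unfolding u_def by linarith
qed



lemma X_cont_pair: "continuous_on UNIV (\<lambda>l. X e l i) \<and> continuous_on UNIV (\<lambda>l. X e l (Suc i))"
proof (induction i)
  case 0 then show ?case by (auto intro!: continuous_intros)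
next
  case (Suc i)
  then have "continuous_on UNIV (\<lambda>l. l * X e l (Suc i) - X e l i)"
    by (intro continuous_intros) auto
  then show ?case using Suc by simp
qed

lemma D_cont: "continuous_on A (\<lambda>l. D n e l)"
proof -
  have "continuous_on UNIV (\<lambda>l. D n e l)"
    unfolding D_def using X_cont_pair by (intro continuous_intros) auto
  then show ?thesis using continuous_on_subset by blast
qed

lemma Dt_root:
  assumes t: "t \<noteq> 0" "t^2 \<noteq> 1" and n: "n \<ge> 1" and F: "F n e \<sigma> t = 0" and s: "\<sigma> = 1 \<or> \<sigma> = -1"
  shows "D n e (t + 1/t) = 0"
proof -
  have "D n e (t + 1/t) * ((1 - t^2) * t^n) = F n e 1 t * F n e (-1) t" by (rule Dt[OF t(1) n])
  also have "\<dots> = 0" using F s by auto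
  finally show ?thesis using t by simp
qed

lemma two_eigs_pos:
  assumes e: "e > 1" and n: "n \<ge> 2"
  shows "\<exists>l1 l2. l1 \<noteq> l2 \<and> D n e l1 = 0 \<and> D n e l2 = 0"
proof -
  define th where "th = pi / real n"
  have th: "0 < th" "th < pi" using n unfolding th_def by (auto simp: field_simps)
  have sth: "sin th > 0" using th by (simp add: sin_gt_zero)
  have nth: "real n * th = pi" using n unfolding th_def by simp
  have n1: "real (n - 1) = real n - 1" using n by simp
  have x1: "X e (2 * cos th) n * sin th = - sin th"
    using Xtrig[of e th n] nth by (simp add: distrib_right sin_add)
  have x2: "X e (2 * cos th) (n - 1) * sin th = - (e * sin th)"
    using Xtrig[of e th "n - 1"] nth n1 by (simp add: left_diff_distrib sin_diff)
  have "D n e (2 * cos th) * sin th = (e^2 - 1) * sin th"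
    unfolding D_def using x1 x2 by (simp add: algebra_simps power2_eq_square)
  then have Dp: "D n e (2 * cos th) = e^2 - 1" using sth by simp
  have "e^2 > 1" using less_1_mult[OF e e] by (simp add: power2_eq_square)
  then have Dp': "D n e (2 * cos th) \<ge> 0" using Dp by simp
  define l0 where "l0 = e + 1/e"
  have ea: "\<bar>e\<bar> > 1" using e by simp
  have "D n e l0 = (1/e)^(n-1) * (1/e - e)"
  proof -
    obtain m where m: "n = Suc m" using n by (cases n) auto
    have "D n e l0 = (1/e)^(Suc m) - e * (1/e)^m" unfolding D_def l0_def X_lam0[OF ea] m by simp
    also have "\<dots> = (1/e)^m * (1/e - e)" by (simp add: algebra_simps)
    finally show ?thesis using m by simp
  qed
  moreover have "(1/e)^(n-1) > 0" using e by simp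
  moreover have "1/e - e < 0"
  proof -
    have "1/e < 1" using e by simp
    then show ?thesis using e by linarith
  qed
  ultimately have Dl0: "D n e l0 < 0" by (simp add: mult_pos_neg)
  have "l0 > 2"
  proof -
    have "(e - 1)^2 > 0" using e by simp
    then have "e * e + 1 > 2 * e" by (simp add: power2_eq_square algebra_simps)
    then show ?thesis unfolding l0_def using e by (simp add: field_simps)
  qed
  then have le: "2 * cos th \<le> l0" using cos_le_one[of th] by linarith
  obtain l1 where l1: "2 * cos th \<le> l1" "l1 \<le> l0" "D n e l1 = 0"
    using IVT2'[of "D n e" l0 0 "2 * cos th", OF _ Dp' le D_cont] Dl0 by auto
  have l1': "l1 < l0" using l1 Dl0 by (cases "l1 = l0") auto
  define s where "s = 1/e"
  have s: "0 < s" "s < 1" "e * s = 1" using e unfolding s_def by auto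
  have F0: "F n e 1 0 = 1" unfolding F_def using n by simp
  have Fs: "F n e 1 s = - ((e - s) * s^n)" unfolding F_def using s by simp
  have Fs': "F n e 1 s < 0" unfolding Fs using s e by simp
  obtain t where t: "0 \<le> t" "t \<le> s" "F n e 1 t = 0"
    using IVT2'[of "F n e 1" s 0 0, OF _ _ _ F_cont] F0 Fs' s by auto
  have t0: "t \<noteq> 0" using t F0 by auto
  have ts: "t < s" using t Fs' by (cases "t = s") auto
  have tpos: "0 < t" using t t0 by simp
  have "t * t < 1 * 1" using tpos ts s by (intro mult_strict_mono) auto
  then have "t^2 < 1" by (simp add: power2_eq_square)
  then have t2: "t^2 \<noteq> 1" by simp
  have Dl2: "D n e (t + 1/t) = 0" by (rule Dt_root[OF t0 t2 _ t(3)]) (use n in auto)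
  have "t + 1/t > l0"
  proof -
    have "1/t - 1/s = (s - t) / (t * s)" using tpos s by (simp add: field_simps)
    moreover have "(s - t) / (t * s) > s - t"
    proof -
      have "t * s < 1 * 1" using tpos ts s by (intro mult_strict_mono) auto
      then have "t * s < 1" by simp
      then have "(s - t) * (t * s) < s - t" using ts tpos s by (simp add: mult_less_cancel_left1)
      then show ?thesis using tpos s by (simp add: less_divide_eq)
    qed
    ultimately have "1/t - 1/s > s - t" by simp
    moreover have "l0 = s + 1/s" unfolding l0_def s_def by simp
    ultimately show ?thesis by simp
  qed
  then have "l1 \<noteq> t + 1/t" using l1' by simp
  then show ?thesis using l1(3) Dl2 by blast
qed

lemma two_eigs:
  assumes e: "\<bar>e\<bar> > 1" and n: "n \<ge> 2"
  shows "\<exists>l1 l2. l1 \<noteq> l2 \<and> D n e l1 = 0 \<and> D n e l2 = 0"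
proof (cases "e > 0")
  case True then show ?thesis using two_eigs_pos[OF _ n] e by simp
next
  case False
  then have "-e > 1" using e by simp
  from two_eigs_pos[OF this n] obtain l1 l2 where l: "l1 \<noteq> l2" "D n (-e) l1 = 0" "D n (-e) l2 = 0" by blast
  have m: "D n e (-l) = (-1)^n * D n (-e) l" for l
    using D_mirror[of n "-e" l] n by simp
  show ?thesis using l m by (intro exI[of _ "-l1"] exI[of _ "-l2"]) auto
qed

lemma outlier_t_pos:
  fixes c :: real
  assumes c: "c > 2"
  shows "\<exists>t. 0 < \<bar>t\<bar> \<and> \<bar>t\<bar> < 1 \<and> c = t + 1/t"
proof -
  define q where "q = sqrt (c^2 - 4)"
  have c4: "c^2 \<ge> 4" using mult_strict_mono[of 2 c 2 c] c by (simp add: power2_eq_square)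
  have q0: "q \<ge> 0" unfolding q_def using c4 by simp
  have q2: "q^2 = c^2 - 4" unfolding q_def using c4 by simp
  have qc: "q < c"
  proof -
    have "q^2 < c^2" using q2 by simp
    then show ?thesis using c by (intro power_less_imp_less_base[of q 2 c]) auto
  qed
  have qc2: "c - 2 < q"
  proof -
    have "(c - 2)^2 < q^2" using q2 c by (simp add: power2_eq_square algebra_simps)
    then show ?thesis using q0 by (intro power_less_imp_less_base[of "c - 2" 2 q]) auto
  qed
  define t where "t = (c - q) / 2"
  have t: "0 < t" "t < 1" unfolding t_def using qc qc2 by auto
  have "t * ((c + q) / 2) = 1" unfolding t_def using q2 by (simp add: power2_eq_square algebra_simps)
  then have h: "1/t = (c + q)/2" using t by (simp add: field_simps)
  have "t + (c + q)/2 = c" unfolding t_def by (simp add: field_simps)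
  then have "c = t + 1/t" unfolding h by simp
  then show ?thesis using t by (intro exI[of _ t]) auto
qed

lemma outlier_t:
  fixes c :: real
  assumes c: "\<bar>c\<bar> > 2"
  shows "\<exists>t. 0 < \<bar>t\<bar> \<and> \<bar>t\<bar> < 1 \<and> c = t + 1/t"
proof (cases "c > 0")
  case True then show ?thesis using outlier_t_pos c by simp
next
  case False
  then have "-c > 2" using c by simp
  from outlier_t_pos[OF this] obtain t where "0 < \<bar>t\<bar>" "\<bar>t\<bar> < 1" "-c = t + 1/t" by blast
  then show ?thesis by (intro exI[of _ "-t"]) (auto simp: algebra_simps)
qed

lemma abs_t_inv:
  fixes t :: real
  assumes "0 < \<bar>t\<bar>" "\<bar>t\<bar> < 1"
  shows "\<bar>t + 1/t\<bar> > 2"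
proof -
  define a where "a = \<bar>t\<bar>"
  have a: "0 < a" "a < 1" using assms unfolding a_def by auto
  have eq: "\<bar>t + 1/t\<bar> = a + 1/a"
  proof (cases "t > 0")
    case True
    then have "1/t > 0" by simp
    then show ?thesis unfolding a_def using True by simp
  next
    case False
    then have tn: "t < 0" using assms by auto
    then have "1/t < 0" by simp
    then have "t + 1/t < 0" using tn by linarith
    then have "\<bar>t + 1/t\<bar> = -t + (- (1/t))" by simp
    also have "\<dots> = a + 1/a" unfolding a_def using tn by simp
    finally show ?thesis .
  qed
  have "(1 - a)^2 > 0" using a by simp
  then have "a * a + 1 > 2 * a" by (simp add: power2_eq_square algebra_simps)
  then have "a + 1/a > 2" using a by (simp add: field_simps)
  then show ?thesis using eq by simp
qed

lemma inj_t:
  fixes t u :: real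
  assumes "0 < \<bar>t\<bar>" "\<bar>t\<bar> < 1" "0 < \<bar>u\<bar>" "\<bar>u\<bar> < 1" "t + 1/t = u + 1/u"
  shows "t = u"
proof -
  have tu: "t \<noteq> 0" "u \<noteq> 0" using assms(1) assms(3) by fastforce+
  have "\<bar>t\<bar> * \<bar>u\<bar> < 1 * 1" using assms by (intro mult_strict_mono) auto
  then have "\<bar>t * u\<bar> < 1" by (simp add: abs_mult)
  then have tu1: "t * u - 1 \<noteq> 0" by auto
  have "(t - u) * (t * u - 1) = t * u * ((t + 1/t) - (u + 1/u))" using tu by (simp add: field_simps)
  also have "\<dots> = 0" using assms(5) by simp
  finally show ?thesis using tu1 by simp
qed



lemma sig_cases: "\<bar>\<sigma>::real\<bar> = 1 \<Longrightarrow> \<sigma> = 1 \<or> \<sigma> = -1" by auto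

lemma shape:
  assumes n: "n \<ge> 2" and e: "\<bar>e\<bar> > 1" and t: "0 < \<bar>t\<bar>" "\<bar>t\<bar> < 1" and F: "F n e \<sigma> t = 0"
    and ev: "is_eigvec n (T n e e) (t + 1/t) z"
  shows "\<exists>c. \<forall>i<n. z i = c * (t^i + \<sigma> * t^(n-1-i))"
proof -
  have t0: "t \<noteq> 0" using t by auto
  have "t^2 < 1" using t by (simp add: abs_square_less_1)
  then have t2: "t^2 \<noteq> 1" by simp
  from eig_X[OF n ev] have z: "\<forall>i<n. z i = z 0 * X e (t + 1/t) i" by blast
  show ?thesis
  proof (intro exI allI impI)
    fix i assume i: "i < n"
    have "z i = z 0 * X e (t + 1/t) i" using z i by blast
    also have "\<dots> = z 0 * (t*(e-t)/(1-t^2) * (t^i + \<sigma> * t^(n-1-i)))"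
      using Xroot[OF t0 t2 F i] by simp
    finally show "z i = (z 0 * (t*(e-t)/(1-t^2))) * (t^i + \<sigma> * t^(n-1-i))" by simp
  qed
qed

lemma flip_shape:
  assumes "\<forall>i<n. z i = c * (t^i + \<sigma> * t^(n-1-i))" "\<sigma> * \<sigma> = 1" "i < n"
  shows "flip n z i = \<sigma> * z i"
proof -
  have a: "n - 1 - i < n" using assms(3) by simp
  have b: "n - 1 - (n - 1 - i) = i" using assms(3) by simp
  have "flip n z i = c * (t^(n-1-i) + \<sigma> * t^i)" unfolding flip_def using assms(1) a b by simp
  also have "\<dots> = \<sigma> * (c * (t^i + \<sigma> * t^(n-1-i)))" using assms(2) by (simp add: algebra_simps)
  also have "\<dots> = \<sigma> * z i" using assms(1,3) by simp
  finally show ?thesis .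
qed

theorem theorem3p4:
  fixes \<epsilon> \<phi> :: real
  assumes "\<epsilon> = \<phi>" and "\<bar>\<epsilon>\<bar> > 1"
  shows "\<exists>\<mu> \<nu> :: nat \<Rightarrow> real.
     (\<forall>n\<ge>2. \<mu> n \<noteq> \<nu> n \<and> is_eigval n (T n \<epsilon> \<phi>) (\<mu> n) \<and> is_eigval n (T n \<epsilon> \<phi>) (\<nu> n))
   \<and> \<mu> \<longlonglongrightarrow> \<epsilon> + 1 / \<epsilon> \<and> \<nu> \<longlonglongrightarrow> \<epsilon> + 1 / \<epsilon>
   \<and> (\<forall>\<^sub>F n in sequentially. outliers n (T n \<epsilon> \<phi>) = {\<mu> n, \<nu> n})
   \<and> (\<forall>x y :: nat \<Rightarrow> nat \<Rightarrow> real.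
        (\<forall>n\<ge>2. is_eigvec n (T n \<epsilon> \<phi>) (\<mu> n) (x n) \<and> vnorm n (x n) = 1
              \<and> is_eigvec n (T n \<epsilon> \<phi>) (\<nu> n) (y n) \<and> vnorm n (y n) = 1) \<longrightarrow>
        (\<forall>\<^sub>F n in sequentially. (\<forall>i<n. flip n (x n) i = x n i \<and> flip n (y n) i = - y n i))
      \<and> (\<lambda>n. vnorm n (vdiff n (x n)
               (proj n (\<lambda>i. vv \<epsilon> n i + ww \<epsilon> n i) (x n)))) \<longlonglongrightarrow> 0
      \<and> (\<lambda>n. vnorm n (vdiff n (y n)
               (proj n (\<lambda>i. vv \<epsilon> n i - ww \<epsilon> n i) (y n)))) \<longlonglongrightarrow> 0)"
proof -
  have ph: "\<phi> = \<epsilon>" using assms(1) by simp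
  have e: "\<bar>\<epsilon>\<bar> > 1" by (rule assms(2))
  have e0: "\<epsilon> \<noteq> 0" using e by auto
  have sdl0: "sdl \<epsilon> > 0" and rr: "0 < rr \<epsilon>" "rr \<epsilon> < 1" using sdl_rr[OF e] by auto
  obtain N1 where N1: "\<And>n. n \<ge> N1 \<Longrightarrow> \<forall>\<sigma>. \<bar>\<sigma>\<bar> = 1 \<longrightarrow> (\<exists>t. \<bar>t - 1/\<epsilon>\<bar> < sdl \<epsilon> \<and> F n \<epsilon> \<sigma> t = 0)"
    using exists_root[OF e] unfolding eventually_sequentially by blast
  obtain N2 where N2: "\<And>n. n \<ge> N2 \<Longrightarrow> \<forall>\<sigma> t1 t2. \<bar>\<sigma>\<bar> = 1 \<and> \<bar>t1 - 1/\<epsilon>\<bar> \<le> sdl \<epsilon> \<and> \<bar>t2 - 1/\<epsilon>\<bar> \<le> sdl \<epsilon>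
        \<and> F n \<epsilon> \<sigma> t1 = 0 \<and> F n \<epsilon> \<sigma> t2 = 0 \<longrightarrow> t1 = t2"
    using unique_root[OF e] unfolding eventually_sequentially by blast
  obtain N3 where N3: "\<And>n. n \<ge> N3 \<Longrightarrow> \<forall>\<sigma> t. \<bar>\<sigma>\<bar> = 1 \<and> 0 < \<bar>t\<bar> \<and> \<bar>t\<bar> < 1 \<and> F n \<epsilon> \<sigma> t = 0 \<longrightarrow> \<bar>t - 1/\<epsilon>\<bar> < sdl \<epsilon>"
    using F_far[OF e sdl0] unfolding eventually_sequentially by blast
  define N where "N = max 2 (max N1 (max N2 N3))"
  have N2': "n \<ge> 2" if "n \<ge> N" for n using that unfolding N_def by simp
  have Nex: "\<exists>t. \<bar>t - 1/\<epsilon>\<bar> < sdl \<epsilon> \<and> F n \<epsilon> \<sigma> t = 0" if "n \<ge> N" "\<bar>\<sigma>\<bar> = 1" for n \<sigma>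
  proof -
    have "n \<ge> N1" using that(1) unfolding N_def by simp
    then show ?thesis using N1 that(2) by blast
  qed
  have Nun: "t1 = t2" if "n \<ge> N" "\<bar>\<sigma>\<bar> = 1" "\<bar>t1 - 1/\<epsilon>\<bar> \<le> sdl \<epsilon>" "\<bar>t2 - 1/\<epsilon>\<bar> \<le> sdl \<epsilon>"
     "F n \<epsilon> \<sigma> t1 = 0" "F n \<epsilon> \<sigma> t2 = 0" for n \<sigma> t1 t2
  proof -
    have "n \<ge> N2" using that(1) unfolding N_def by simp
    from N2[OF this, rule_format, of \<sigma> t1 t2] that(2-6) show ?thesis by blast
  qed
  have Nfar: "\<bar>t - 1/\<epsilon>\<bar> < sdl \<epsilon>" if "n \<ge> N" "\<bar>\<sigma>\<bar> = 1" "0 < \<bar>t\<bar>" "\<bar>t\<bar> < 1" "F n \<epsilon> \<sigma> t = 0" for n \<sigma> t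
  proof -
    have "n \<ge> N3" using that(1) unfolding N_def by simp
    from N3[OF this, rule_format, of \<sigma> t] that(2-5) show ?thesis by blast
  qed
  define tt where "tt \<sigma> n = (SOME t. \<bar>t - 1/\<epsilon>\<bar> < sdl \<epsilon> \<and> F n \<epsilon> \<sigma> t = 0)" for \<sigma> n
  have tt: "\<bar>tt \<sigma> n - 1/\<epsilon>\<bar> < sdl \<epsilon> \<and> F n \<epsilon> \<sigma> (tt \<sigma> n) = 0" if "n \<ge> N" "\<bar>\<sigma>\<bar> = 1" for \<sigma> n
    unfolding tt_def by (rule someI_ex[OF Nex[OF that]])
  have ttw: "0 < \<bar>tt \<sigma> n\<bar> \<and> \<bar>tt \<sigma> n\<bar> \<le> rr \<epsilon> \<and> \<bar>tt \<sigma> n\<bar> < 1" if "n \<ge> N" "\<bar>\<sigma>\<bar> = 1" for \<sigma> n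
  proof -
    have "\<bar>tt \<sigma> n - 1/\<epsilon>\<bar> \<le> sdl \<epsilon>" using tt[OF that] by simp
    from win[OF e this] show ?thesis by simp
  qed
  have Droot: "D n \<epsilon> (tt \<sigma> n + 1/tt \<sigma> n) = 0" if "n \<ge> N" "\<bar>\<sigma>\<bar> = 1" for \<sigma> n
  proof -
    have "(tt \<sigma> n)^2 < 1" using ttw[OF that] by (simp add: abs_square_less_1)
    then have t2: "(tt \<sigma> n)^2 \<noteq> 1" by simp
    have t0: "tt \<sigma> n \<noteq> 0" using ttw[OF that] by auto
    have n1: "n \<ge> 1" using N2'[OF that(1)] by simp
    show ?thesis by (rule Dt_root[OF t0 t2 n1 conjunct2[OF tt[OF that]] sig_cases[OF that(2)]])
  qed
  define pp where "pp n = (SOME p. fst p \<noteq> snd p \<and> D n \<epsilon> (fst p) = 0 \<and> D n \<epsilon> (snd p) = 0)" for n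
  have pp: "fst (pp n) \<noteq> snd (pp n) \<and> D n \<epsilon> (fst (pp n)) = 0 \<and> D n \<epsilon> (snd (pp n)) = 0" if n2: "n \<ge> 2" for n
  proof -
    obtain l1 l2 where "l1 \<noteq> l2 \<and> D n \<epsilon> l1 = 0 \<and> D n \<epsilon> l2 = 0" using two_eigs[OF e n2] by blast
    then have "\<exists>p. fst p \<noteq> snd p \<and> D n \<epsilon> (fst p) = 0 \<and> D n \<epsilon> (snd p) = 0" by (intro exI[of _ "(l1, l2)"]) auto
    then show ?thesis unfolding pp_def by (rule someI_ex)
  qed
  define \<mu> where "\<mu> n = (if N \<le> n then tt 1 n + 1/tt 1 n else fst (pp n))" for n
  define \<nu> where "\<nu> n = (if N \<le> n then tt (-1) n + 1/tt (-1) n else snd (pp n))" for n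
  have s1: "\<bar>1::real\<bar> = 1" "\<bar>-1::real\<bar> = 1" by simp_all
  have ttne: "tt 1 n \<noteq> tt (-1) n" if "n \<ge> N" for n
  proof
    assume eq: "tt 1 n = tt (-1) n"
    define t where "t = tt 1 n"
    have F1: "F n \<epsilon> 1 t = 0" using tt[OF that s1(1)] unfolding t_def by simp
    have F2: "F n \<epsilon> (-1) t = 0" using tt[OF that s1(2)] eq unfolding t_def by simp
    have "F n \<epsilon> 1 t - F n \<epsilon> (-1) t = - 2 * ((\<epsilon> - t) * t^n)" unfolding F_def by (simp add: algebra_simps)
    then have "(\<epsilon> - t) * t^n = 0" using F1 F2 by simp
    moreover have "t \<noteq> 0" "\<epsilon> \<noteq> t" using ttw[OF that s1(1)] e unfolding t_def by auto
    ultimately show False by simp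
  qed
  have A: "\<forall>n\<ge>2. \<mu> n \<noteq> \<nu> n \<and> is_eigval n (T n \<epsilon> \<epsilon>) (\<mu> n) \<and> is_eigval n (T n \<epsilon> \<epsilon>) (\<nu> n)"
  proof (intro allI impI)
    fix n :: nat assume n: "n \<ge> 2"
    show "\<mu> n \<noteq> \<nu> n \<and> is_eigval n (T n \<epsilon> \<epsilon>) (\<mu> n) \<and> is_eigval n (T n \<epsilon> \<epsilon>) (\<nu> n)"
    proof (cases "N \<le> n")
      case True
      have "\<mu> n \<noteq> \<nu> n"
      proof
        assume "\<mu> n = \<nu> n"
        then have "tt 1 n + 1/tt 1 n = tt (-1) n + 1/tt (-1) n" unfolding \<mu>_def \<nu>_def using True by simp
        then have "tt 1 n = tt (-1) n" using ttw[OF True s1(1)] ttw[OF True s1(2)] inj_t by blast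
        then show False using ttne[OF True] by simp
      qed
      then show ?thesis unfolding \<mu>_def \<nu>_def using True eigval_iff[OF n] Droot[OF True s1(1)] Droot[OF True s1(2)] by simp
    next
      case False
      then show ?thesis unfolding \<mu>_def \<nu>_def using pp[OF n] eigval_iff[OF n] by simp
    qed
  qed
  have ttlim: "(\<lambda>n. tt \<sigma> n) \<longlonglongrightarrow> 1/\<epsilon>" if s: "\<bar>\<sigma>\<bar> = 1" for \<sigma>
  proof (rule tendstoI)
    fix d :: real assume d: "0 < d"
    show "\<forall>\<^sub>F n in sequentially. dist (tt \<sigma> n) (1/\<epsilon>) < d"
      using F_far[OF e d] eventually_ge_at_top[of N]
    proof eventually_elim
      case (elim n)
      then show ?case using ttw[OF elim(2) s] tt[OF elim(2) s] s by (auto simp: dist_real_def)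
    qed
  qed
  have lamlim: "(\<lambda>n. tt \<sigma> n + 1/tt \<sigma> n) \<longlonglongrightarrow> \<epsilon> + 1/\<epsilon>" if s: "\<bar>\<sigma>\<bar> = 1" for \<sigma>
  proof -
    have "(\<lambda>n. tt \<sigma> n + 1/tt \<sigma> n) \<longlonglongrightarrow> 1/\<epsilon> + 1/(1/\<epsilon>)"
      by (intro tendsto_intros ttlim[OF s]) (use e0 in simp)
    then show ?thesis by (simp add: add.commute)
  qed
  have "\<forall>\<^sub>F n in sequentially. tt 1 n + 1/tt 1 n = \<mu> n"
    using eventually_ge_at_top[of N] by eventually_elim (simp add: \<mu>_def)
  then have mulim: "\<mu> \<longlonglongrightarrow> \<epsilon> + 1/\<epsilon>"
    by (rule Lim_transform_eventually[OF lamlim[OF s1(1)]])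
  have "\<forall>\<^sub>F n in sequentially. tt (-1) n + 1/tt (-1) n = \<nu> n"
    using eventually_ge_at_top[of N] by eventually_elim (simp add: \<nu>_def)
  then have nulim: "\<nu> \<longlonglongrightarrow> \<epsilon> + 1/\<epsilon>"
    by (rule Lim_transform_eventually[OF lamlim[OF s1(2)]])
  have C: "\<forall>\<^sub>F n in sequentially. outliers n (T n \<epsilon> \<epsilon>) = {\<mu> n, \<nu> n}"
    using eventually_ge_at_top[of N]
  proof eventually_elim
    case (elim n)
    have n: "n \<ge> 2" using N2'[OF elim] by simp
    have mu: "\<mu> n = tt 1 n + 1/tt 1 n" "\<nu> n = tt (-1) n + 1/tt (-1) n" unfolding \<mu>_def \<nu>_def using elim by auto
    show ?case
    proof
      show "outliers n (T n \<epsilon> \<epsilon>) \<subseteq> {\<mu> n, \<nu> n}"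
      proof
        fix c assume c: "c \<in> outliers n (T n \<epsilon> \<epsilon>)"
        then have Dc: "D n \<epsilon> c = 0" and c2: "\<bar>c\<bar> > 2" unfolding outliers_def using eigval_iff[OF n] by auto
        obtain t where t: "0 < \<bar>t\<bar>" "\<bar>t\<bar> < 1" "c = t + 1/t" using outlier_t[OF c2] by blast
        have t0: "t \<noteq> 0" using t by auto
        have "D n \<epsilon> (t + 1/t) * ((1 - t^2) * t^n) = F n \<epsilon> 1 t * F n \<epsilon> (-1) t"
          by (rule Dt[OF t0]) (use n in simp)
        then have "F n \<epsilon> 1 t * F n \<epsilon> (-1) t = 0" using Dc t by simp
        then obtain \<sigma> where s: "\<bar>\<sigma>\<bar> = 1" "F n \<epsilon> \<sigma> t = 0" "\<sigma> = 1 \<or> \<sigma> = -1"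
          by (metis abs_minus_cancel abs_one mult_eq_0_iff)
        have w: "\<bar>t - 1/\<epsilon>\<bar> < sdl \<epsilon>" by (rule Nfar[OF elim s(1) t(1) t(2) s(2)])
        have "t = tt \<sigma> n"
          by (rule Nun[OF elim s(1) _ _ s(2) conjunct2[OF tt[OF elim s(1)]]]) (use w tt[OF elim s(1)] in auto)
        then show "c \<in> {\<mu> n, \<nu> n}" using s(3) t(3) mu by auto
      qed
    next
      show "{\<mu> n, \<nu> n} \<subseteq> outliers n (T n \<epsilon> \<epsilon>)"
      proof -
        have "\<bar>\<mu> n\<bar> > 2" "\<bar>\<nu> n\<bar> > 2" unfolding mu using ttw[OF elim s1(1)] ttw[OF elim s1(2)] abs_t_inv by auto
        moreover have "is_eigval n (T n \<epsilon> \<epsilon>) (\<mu> n)" "is_eigval n (T n \<epsilon> \<epsilon>) (\<nu> n)" using A n by auto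
        ultimately show ?thesis unfolding outliers_def by auto
      qed
    qed
  qed
  have DE: "\<forall>x y :: nat \<Rightarrow> nat \<Rightarrow> real.
        (\<forall>n\<ge>2. is_eigvec n (T n \<epsilon> \<epsilon>) (\<mu> n) (x n) \<and> vnorm n (x n) = 1
              \<and> is_eigvec n (T n \<epsilon> \<epsilon>) (\<nu> n) (y n) \<and> vnorm n (y n) = 1) \<longrightarrow>
        (\<forall>\<^sub>F n in sequentially. (\<forall>i<n. flip n (x n) i = x n i \<and> flip n (y n) i = - y n i))
      \<and> (\<lambda>n. vnorm n (vdiff n (x n)
               (proj n (\<lambda>i. vv \<epsilon> n i + ww \<epsilon> n i) (x n)))) \<longlonglongrightarrow> 0
      \<and> (\<lambda>n. vnorm n (vdiff n (y n)
               (proj n (\<lambda>i. vv \<epsilon> n i - ww \<epsilon> n i) (y n)))) \<longlonglongrightarrow> 0"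
  proof (intro allI impI)
    fix x y :: "nat \<Rightarrow> nat \<Rightarrow> real"
    assume H: "\<forall>n\<ge>2. is_eigvec n (T n \<epsilon> \<epsilon>) (\<mu> n) (x n) \<and> vnorm n (x n) = 1
              \<and> is_eigvec n (T n \<epsilon> \<epsilon>) (\<nu> n) (y n) \<and> vnorm n (y n) = 1"
    have gen: "\<exists>c. \<forall>i<n. z i = c * ((tt \<sigma> n)^i + \<sigma> * (tt \<sigma> n)^(n-1-i))"
      if n: "n \<ge> N" and s: "\<bar>\<sigma>\<bar> = 1" and ev: "is_eigvec n (T n \<epsilon> \<epsilon>) (tt \<sigma> n + 1/tt \<sigma> n) z" for n \<sigma> z
      using shape[of n \<epsilon> "tt \<sigma> n" \<sigma> z] N2'[OF n] e ttw[OF n s] tt[OF n s] ev by auto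
    have xs: "\<exists>c. \<forall>i<n. x n i = c * ((tt 1 n)^i + 1 * (tt 1 n)^(n-1-i))" if n: "n \<ge> N" for n
      using gen[OF n s1(1), of "x n"] H N2'[OF n] n unfolding \<mu>_def by auto
    have ys: "\<exists>c. \<forall>i<n. y n i = c * ((tt (-1) n)^i + (-1) * (tt (-1) n)^(n-1-i))" if n: "n \<ge> N" for n
      using gen[OF n s1(2), of "y n"] H N2'[OF n] n unfolding \<nu>_def by auto
    have flipx: "\<forall>i<n. flip n (x n) i = x n i \<and> flip n (y n) i = - y n i" if n: "n \<ge> N" for n
    proof (intro allI impI conjI)
      fix i assume i: "i < n"
      obtain c where c: "\<forall>i<n. x n i = c * ((tt 1 n)^i + 1 * (tt 1 n)^(n-1-i))" using xs[OF n] by blast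
      show "flip n (x n) i = x n i" using flip_shape[OF c _ i] by simp
      obtain c' where c': "\<forall>i<n. y n i = c' * ((tt (-1) n)^i + (-1) * (tt (-1) n)^(n-1-i))" using ys[OF n] by blast
      show "flip n (y n) i = - y n i" using flip_shape[OF c' _ i] by simp
    qed
    have projlim: "(\<lambda>n. vnorm n (vdiff n (z n) (proj n (\<lambda>i. (1/\<epsilon>)^i + \<sigma> * (1/\<epsilon>)^(n-1-i)) (z n)))) \<longlonglongrightarrow> 0"
      if s: "\<bar>\<sigma>\<bar> = 1" and zs: "\<And>n. n \<ge> N \<Longrightarrow> (\<exists>c. \<forall>i<n. z n i = c * ((tt \<sigma> n)^i + \<sigma> * (tt \<sigma> n)^(n-1-i)))
           \<and> vnorm n (z n) = 1" for \<sigma> z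
    proof -
      define r where "r = rr \<epsilon>"
      define K where "K = 8 / (1-r)^4"
      have r: "0 \<le> r" "r < 1" using rr unfolding r_def by auto
      have sr: "\<bar>1/\<epsilon>\<bar> \<le> r"
      proof -
        have "\<bar>1/\<epsilon>\<bar> < 1" using e by (simp add: abs_divide divide_less_eq)
        then show ?thesis unfolding r_def rr_def by simp
      qed
      have bnd: "vnorm n (vdiff n (z n) (proj n (\<lambda>i. (1/\<epsilon>)^i + \<sigma> * (1/\<epsilon>)^(n-1-i)) (z n)))
                 \<le> sqrt (K * \<bar>tt \<sigma> n - 1/\<epsilon>\<bar>)" if n: "n \<ge> N" for n
      proof -
        obtain c where c: "\<forall>i<n. z n i = c * ((tt \<sigma> n)^i + \<sigma> * (tt \<sigma> n)^(n-1-i))" and nz: "vnorm n (z n) = 1"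
          using zs[OF n] by blast
        have "(\<Sum>i<n. (z n i)^2) = 1"
        proof -
          have "sqrt (\<Sum>i<n. (z n i)^2) = 1" using nz unfolding vnorm_def .
          then show ?thesis by simp
        qed
        then have "(\<Sum>i<n. (z n i - proj n (\<lambda>i. (1/\<epsilon>)^i + \<sigma> * (1/\<epsilon>)^(n-1-i)) (z n) i)^2) \<le> K * \<bar>tt \<sigma> n - 1/\<epsilon>\<bar>"
          unfolding K_def
          using proj_bound[of n r "tt \<sigma> n" "1/\<epsilon>" \<sigma> "z n" c] N2'[OF n] r ttw[OF n s] sr s c unfolding r_def
          by auto
        then show ?thesis unfolding vnorm_def vdiff_def by (intro real_sqrt_le_mono)
      qed
      have "(\<lambda>n. sqrt (K * \<bar>tt \<sigma> n - 1/\<epsilon>\<bar>)) \<longlonglongrightarrow> sqrt (K * \<bar>1/\<epsilon> - 1/\<epsilon>\<bar>)"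
        by (intro tendsto_intros ttlim[OF s])
      then have lim0: "(\<lambda>n. sqrt (K * \<bar>tt \<sigma> n - 1/\<epsilon>\<bar>)) \<longlonglongrightarrow> 0" by simp
      show ?thesis
      proof (rule tendsto_sandwich[OF _ _ tendsto_const lim0])
        show "\<forall>\<^sub>F n in sequentially. 0 \<le> vnorm n (vdiff n (z n) (proj n (\<lambda>i. (1/\<epsilon>)^i + \<sigma> * (1/\<epsilon>)^(n-1-i)) (z n)))"
          unfolding vnorm_def by (intro always_eventually allI real_sqrt_ge_zero sum_nonneg) simp
        show "\<forall>\<^sub>F n in sequentially. vnorm n (vdiff n (z n) (proj n (\<lambda>i. (1/\<epsilon>)^i + \<sigma> * (1/\<epsilon>)^(n-1-i)) (z n)))
                 \<le> sqrt (K * \<bar>tt \<sigma> n - 1/\<epsilon>\<bar>)"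
          using eventually_ge_at_top[of N] by eventually_elim (rule bnd)
      qed
    qed
    have ux: "(\<lambda>i. vv \<epsilon> n i + ww \<epsilon> n i) = (\<lambda>i. (1/\<epsilon>)^i + 1 * (1/\<epsilon>)^(n-1-i))" for n
      by (simp add: vv_def ww_def flip_def)
    have uy: "(\<lambda>i. vv \<epsilon> n i - ww \<epsilon> n i) = (\<lambda>i. (1/\<epsilon>)^i + (-1) * (1/\<epsilon>)^(n-1-i))" for n
      by (simp add: vv_def ww_def flip_def)
    have lx: "(\<lambda>n. vnorm n (vdiff n (x n) (proj n (\<lambda>i. vv \<epsilon> n i + ww \<epsilon> n i) (x n)))) \<longlonglongrightarrow> 0"
      unfolding ux
    proof (rule projlim[OF s1(1)])
      fix n assume n: "n \<ge> N"
      show "(\<exists>c. \<forall>i<n. x n i = c * ((tt 1 n)^i + 1 * (tt 1 n)^(n-1-i))) \<and> vnorm n (x n) = 1"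
        using xs[OF n] H N2'[OF n] by blast
    qed
    have ly: "(\<lambda>n. vnorm n (vdiff n (y n) (proj n (\<lambda>i. vv \<epsilon> n i - ww \<epsilon> n i) (y n)))) \<longlonglongrightarrow> 0"
      unfolding uy
    proof (rule projlim[OF s1(2)])
      fix n assume n: "n \<ge> N"
      show "(\<exists>c. \<forall>i<n. y n i = c * ((tt (-1) n)^i + (-1) * (tt (-1) n)^(n-1-i))) \<and> vnorm n (y n) = 1"
        using ys[OF n] H N2'[OF n] by blast
    qed
    have "\<forall>\<^sub>F n in sequentially. (\<forall>i<n. flip n (x n) i = x n i \<and> flip n (y n) i = - y n i)"
      using eventually_ge_at_top[of N] by eventually_elim (rule flipx)
    then show "(\<forall>\<^sub>F n in sequentially. (\<forall>i<n. flip n (x n) i = x n i \<and> flip n (y n) i = - y n i))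
      \<and> (\<lambda>n. vnorm n (vdiff n (x n) (proj n (\<lambda>i. vv \<epsilon> n i + ww \<epsilon> n i) (x n)))) \<longlonglongrightarrow> 0
      \<and> (\<lambda>n. vnorm n (vdiff n (y n) (proj n (\<lambda>i. vv \<epsilon> n i - ww \<epsilon> n i) (y n)))) \<longlonglongrightarrow> 0"
      using lx ly by blast
  qed
  show ?thesis unfolding ph
    by (rule exI[of _ \<mu>], rule exI[of _ \<nu>]) (use A mulim nulim C DE in blast)
qed


end
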